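(* Let $(X,d)$ be a compact doubling metric space with $\operatorname{diam}(X,d)=1/2$ and $\mathcal S$ a hyperbolic filling with parameters $a\ge\lambda\ge6$. Let $\rho:\mathcal S\to(0,\infty)$ satisfy (H1) and (H4) (exponent $p$). Let $C>1$, let $\mu_k$ be a $(C,\pi)$-balanced probability mass function on $\mathcal S_k$, and let $f_0:\mathcal S_{k+1}\to(0,1]$ be a probability mass function such that $(\mu_k,f_0)$ is $(C,\pi)$-compatible. Let $e=\{w_1,w_1'\}$ be a horizontal edge in $\mathcal S_{k+1}$ on which $f_0$ is $(C,\pi)$-unbalanced. If $e'=\{w,w'\}$ is a horizontal edge in $\mathcal S_{k+1}$ on which $f_0$ is $(C,\pi)$-balanced, then $B^e_{k+1}(f_0)$ is also $(C,\pi)$-balanced on $e'$.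
   Context: Hyperbolic filling: $X_0\subset X_1\subset\cdots$ increasing, $X_n$ maximal $a^{-n}$-separated in $X$ ($X_0=\{x_0\}$); $\mathcal S_n=\{(x,n):x\in X_n\}$, $\mathcal S=\bigcup_n\mathcal S_n$, $v_0=(x_0,0)$. Each $(x,n)$, $n\ge1$, has a fixed parent $(y,n-1)$ with $d(x,y)=\min_{z\in X_{n-1}}d(x,z)$; $\mathcal D_n(v)$ = descendants of $v$ in $\mathcal S_n$; genealogy $g(v)=(v_0,\dots,v_k=v)$. $D_2$: graph distance for the graph with edges vertex–parent and horizontal edges between distinct $(x,n),(y,n)$ with $B(x,\lambda a^{-n})\cap B(y,\lambda a^{-n})\ne\emptyset$. $\pi(v)=\prod_{w\in g(v)}\rho(w)$. (H1) $0<\eta_-\le\rho\le\eta_+<1$. (H4) $\sum_{w\in\mathcal D_n(v)}\pi(w)^p\le\pi(v)^p$ for all $v\in\mathcal S_m$, $n>m$. $f:\mathcal S_k\to(0,\infty)$ is $(C,\pi)$-balanced if $f(u)/\pi(u)^p\le C^2f(v)/\pi(v)^p$ for all $u,v\in\mathcal S_k$ with $D_2(u,v)=1$; it is $(C,\pi)$-balanced on an edge $\{u,v\}$ if $C^{-2}f(v)/\pi(v)^p\le f(u)/\pi(u)^p\le C^2f(v)/\pi(v)^p$, and $(C,\pi)$-unbalanced on it otherwise. $(f_0,f_1)$ is $(C,\pi)$-compatible if $f_0(u)/\pi(u)^p\le f_1(v)/\pi(v)^p\le Cf_0(u)/\pi(u)^p$ whenever $u$ is the parent of $v$. Balancing operator: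 for a horizontal edge $e=\{u,v\}$ in $\mathcal S_j$ and $f:\mathcal S_j\to(0,\infty)$, $B^e_j(f)=f$ if $f$ is balanced on $e$; if $f(u)/\pi(u)^p>C^2f(v)/\pi(v)^p$, then $B^e_j(f)$ agrees with $f$ off $\{u,v\}$ and equals $f(u)-\alpha$ at $u$, $f(v)+\alpha$ at $v$, with $\alpha(C^2/\pi(v)^p+1/\pi(u)^p)=f(u)/\pi(u)^p-C^2f(v)/\pi(v)^p$; symmetrically if $f(v)/\pi(v)^p>C^2f(u)/\pi(u)^p$. *)

theory Defs
  imports "HOL-Analysis.Analysis"
begin

definition doubling_metric :: "'a set \<Rightarrow> ('a \<Rightarrow> 'a \<Rightarrow> real) \<Rightarrow> bool" where
  "doubling_metric X d \<longleftrightarrow> Metric_space X d \<and>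
     (\<exists>N::nat. \<forall>x\<in>X. \<forall>r>0. \<exists>F. finite F \<and> card F \<le> N \<and> F \<subseteq> X \<and>
        Metric_space.mball X d x r \<subseteq> (\<Union>y\<in>F. Metric_space.mball X d y (r/2)))"

definition mdiam :: "'a set \<Rightarrow> ('a \<Rightarrow> 'a \<Rightarrow> real) \<Rightarrow> real" where
  "mdiam X d = Sup {d x y | x y. x \<in> X \<and> y \<in> X}"

definition separated :: "'a set \<Rightarrow> ('a \<Rightarrow> 'a \<Rightarrow> real) \<Rightarrow> real \<Rightarrow> 'a set \<Rightarrow> bool" where
  "separated X d r A \<longleftrightarrow> A \<subseteq> X \<and> (\<forall>x\<in>A. \<forall>y\<in>A. x \<noteq> y \<longrightarrow> r \<le> d x y)"

definition maximal_separated :: "'a set \<Rightarrow> ('a \<Rightarrow> 'a \<Rightarrow> real) \<Rightarrow> real \<Rightarrow> 'a set \<Rightarrow> bool" where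
  "maximal_separated X d r A \<longleftrightarrow> separated X d r A \<and>
     (\<forall>B. separated X d r B \<and> A \<subseteq> B \<longrightarrow> B = A)"

definition level :: "(nat \<Rightarrow> 'a set) \<Rightarrow> nat \<Rightarrow> ('a \<times> nat) set" where
  "level Xs n = {(x, n) | x. x \<in> Xs n}"

definition vertices :: "(nat \<Rightarrow> 'a set) \<Rightarrow> ('a \<times> nat) set" where
  "vertices Xs = (\<Union>n. level Xs n)"

definition hyperbolic_filling ::
  "'a set \<Rightarrow> ('a \<Rightarrow> 'a \<Rightarrow> real) \<Rightarrow> real \<Rightarrow> real \<Rightarrow> 'a \<Rightarrow> (nat \<Rightarrow> 'a set)
     \<Rightarrow> ('a \<times> nat \<Rightarrow> 'a \<times> nat) \<Rightarrow> bool" where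
  "hyperbolic_filling X d a lam x0 Xs par \<longleftrightarrow>
     a \<ge> lam \<and> lam \<ge> 6 \<and>
     Xs 0 = {x0} \<and> x0 \<in> X \<and>
     (\<forall>n. Xs n \<subseteq> Xs (Suc n)) \<and>
     (\<forall>n. maximal_separated X d (a powr (- real n)) (Xs n)) \<and>
     (\<forall>n. \<forall>x\<in>Xs (Suc n). \<exists>y. par (x, Suc n) = (y, n) \<and> y \<in> Xs n \<and>
          (\<forall>z\<in>Xs n. d x y \<le> d x z))"

definition filling_pi ::
  "('a \<times> nat \<Rightarrow> 'a \<times> nat) \<Rightarrow> ('a \<times> nat \<Rightarrow> real) \<Rightarrow> 'a \<times> nat \<Rightarrow> real" where
  "filling_pi par rho v = (\<Prod>i\<in>{0..snd v}. rho ((par ^^ i) v))"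

definition descendants ::
  "(nat \<Rightarrow> 'a set) \<Rightarrow> ('a \<times> nat \<Rightarrow> 'a \<times> nat) \<Rightarrow> nat \<Rightarrow> 'a \<times> nat \<Rightarrow> ('a \<times> nat) set" where
  "descendants Xs par n v = {w \<in> level Xs n. n \<ge> snd v \<and> (par ^^ (n - snd v)) w = v}"

definition horizontal_edge ::
  "'a set \<Rightarrow> ('a \<Rightarrow> 'a \<Rightarrow> real) \<Rightarrow> real \<Rightarrow> real \<Rightarrow> (nat \<Rightarrow> 'a set)
     \<Rightarrow> 'a \<times> nat \<Rightarrow> 'a \<times> nat \<Rightarrow> bool" where
  "horizontal_edge X d a lam Xs u v \<longleftrightarrow>
     (\<exists>n x y. u = (x, n) \<and> v = (y, n) \<and> x \<in> Xs n \<and> y \<in> Xs n \<and> x \<noteq> y \<and>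
        Metric_space.mball X d x (lam * a powr (- real n)) \<inter>
        Metric_space.mball X d y (lam * a powr (- real n)) \<noteq> {})"

definition filling_adj ::
  "'a set \<Rightarrow> ('a \<Rightarrow> 'a \<Rightarrow> real) \<Rightarrow> real \<Rightarrow> real \<Rightarrow> (nat \<Rightarrow> 'a set)
     \<Rightarrow> ('a \<times> nat \<Rightarrow> 'a \<times> nat) \<Rightarrow> 'a \<times> nat \<Rightarrow> 'a \<times> nat \<Rightarrow> bool" where
  "filling_adj X d a lam Xs par u v \<longleftrightarrow>
     u \<in> vertices Xs \<and> v \<in> vertices Xs \<and> u \<noteq> v \<and>
     ((snd u > 0 \<and> par u = v) \<or> (snd v > 0 \<and> par v = u) \<or>
      horizontal_edge X d a lam Xs u v)"

definition H1 :: "(nat \<Rightarrow> 'a set) \<Rightarrow> ('a \<times> nat \<Rightarrow> real) \<Rightarrow> bool" where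
  "H1 Xs rho \<longleftrightarrow> (\<exists>eta_minus eta_plus. 0 < eta_minus \<and> eta_minus \<le> eta_plus \<and> eta_plus < 1 \<and>
      (\<forall>v\<in>vertices Xs. eta_minus \<le> rho v \<and> rho v \<le> eta_plus))"

definition H4 :: "(nat \<Rightarrow> 'a set) \<Rightarrow> ('a \<times> nat \<Rightarrow> 'a \<times> nat) \<Rightarrow> ('a \<times> nat \<Rightarrow> real) \<Rightarrow> real \<Rightarrow> bool" where
  "H4 Xs par rho p \<longleftrightarrow> (\<forall>m n. \<forall>v\<in>level Xs m. n > m \<longrightarrow>
      (\<Sum>w\<in>descendants Xs par n v. filling_pi par rho w powr p) \<le> filling_pi par rho v powr p)"

text \<open>Here P w stands for pi(w)^p.\<close>

definition balanced_on_edge :: "real \<Rightarrow> ('b \<Rightarrow> real) \<Rightarrow> ('b \<Rightarrow> real) \<Rightarrow> 'b \<Rightarrow> 'b \<Rightarrow> bool" where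
  "balanced_on_edge C P f u v \<longleftrightarrow>
     (f v / P v) / C\<^sup>2 \<le> f u / P u \<and> f u / P u \<le> C\<^sup>2 * (f v / P v)"

definition balancing_op :: "real \<Rightarrow> ('b \<Rightarrow> real) \<Rightarrow> 'b \<Rightarrow> 'b \<Rightarrow> ('b \<Rightarrow> real) \<Rightarrow> 'b \<Rightarrow> real" where
  "balancing_op C P u v f =
     (if f u / P u > C\<^sup>2 * (f v / P v) then
        (let \<alpha> = (f u / P u - C\<^sup>2 * (f v / P v)) / (C\<^sup>2 / P v + 1 / P u)
         in f(u := f u - \<alpha>, v := f v + \<alpha>))
      else if f v / P v > C\<^sup>2 * (f u / P u) then
        (let \<alpha> = (f v / P v - C\<^sup>2 * (f u / P u)) / (C\<^sup>2 / P u + 1 / P v)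
         in f(v := f v - \<alpha>, u := f u + \<alpha>))
      else f)"

definition balanced_level ::
  "'a set \<Rightarrow> ('a \<Rightarrow> 'a \<Rightarrow> real) \<Rightarrow> real \<Rightarrow> real \<Rightarrow> (nat \<Rightarrow> 'a set)
     \<Rightarrow> ('a \<times> nat \<Rightarrow> 'a \<times> nat) \<Rightarrow> real \<Rightarrow> ('a \<times> nat \<Rightarrow> real) \<Rightarrow> nat
     \<Rightarrow> ('a \<times> nat \<Rightarrow> real) \<Rightarrow> bool" where
  "balanced_level X d a lam Xs par C P k f \<longleftrightarrow>
     (\<forall>u\<in>level Xs k. 0 < f u) \<and>
     (\<forall>u\<in>level Xs k. \<forall>v\<in>level Xs k. filling_adj X d a lam Xs par u v \<longrightarrow>
        f u / P u \<le> C\<^sup>2 * (f v / P v))"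

definition compatible ::
  "(nat \<Rightarrow> 'a set) \<Rightarrow> ('a \<times> nat \<Rightarrow> 'a \<times> nat) \<Rightarrow> real \<Rightarrow> ('a \<times> nat \<Rightarrow> real) \<Rightarrow> nat
     \<Rightarrow> ('a \<times> nat \<Rightarrow> real) \<Rightarrow> ('a \<times> nat \<Rightarrow> real) \<Rightarrow> bool" where
  "compatible Xs par C P k f0 f1 \<longleftrightarrow>
     (\<forall>v\<in>level Xs (Suc k). f0 (par v) / P (par v) \<le> f1 v / P v \<and>
         f1 v / P v \<le> C * (f0 (par v) / P (par v)))"

definition prob_mass :: "('b \<Rightarrow> real) \<Rightarrow> 'b set \<Rightarrow> bool" where
  "prob_mass f S \<longleftrightarrow> (\<forall>v\<in>S. 0 < f v) \<and> (\<Sum>v\<in>S. f v) = 1"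

end

theory Submission
  imports Defs
begin

lemma bal_step:
  fixes P f :: "'b \<Rightarrow> real" and C :: real
  assumes Pu: "P u > 0" and Pv: "P v > 0" and C: "C > 1" and uv: "u \<noteq> v"
    and gt: "f u / P u > C\<^sup>2 * (f v / P v)"
    and g: "g = (let \<alpha> = (f u / P u - C\<^sup>2 * (f v / P v)) / (C\<^sup>2 / P v + 1 / P u)
         in f(u := f u - \<alpha>, v := f v + \<alpha>))"
  shows "\<forall>z. z \<noteq> u \<and> z \<noteq> v \<longrightarrow> g z = f z"
    and "g u / P u \<le> f u / P u" and "g v / P v \<ge> f v / P v"
    and "g u / P u = C\<^sup>2 * (g v / P v)"
proof -
  define \<alpha> where "\<alpha> = (f u / P u - C\<^sup>2 * (f v / P v)) / (C\<^sup>2 / P v + 1 / P u)"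
  have den: "C\<^sup>2 / P v + 1 / P u > 0" using Pu Pv C by (intro add_pos_pos divide_pos_pos) auto
  have a0: "\<alpha> \<ge> 0" unfolding \<alpha>_def using gt den by simp
  have gu: "g u = f u - \<alpha>" and gv: "g v = f v + \<alpha>" using uv unfolding g \<alpha>_def Let_def by auto
  show "\<forall>z. z \<noteq> u \<and> z \<noteq> v \<longrightarrow> g z = f z" unfolding g by (simp add: Let_def)
  show "g u / P u \<le> f u / P u" using gu a0 Pu by (simp add: divide_right_mono)
  show "g v / P v \<ge> f v / P v" using gv a0 Pv by (simp add: divide_right_mono)
  have "\<alpha> * (C\<^sup>2 / P v + 1 / P u) = f u / P u - C\<^sup>2 * (f v / P v)"
    unfolding \<alpha>_def using den by simp
  then show "g u / P u = C\<^sup>2 * (g v / P v)" unfolding gu gv using Pu Pv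
    by (simp add: field_simps)
qed

lemma core:
  fixes R G :: "'b \<Rightarrow> real" and C :: real
  assumes C: "C > 1" and uv: "u \<noteq> v" and ww: "w \<noteq> w'"
    and pos: "R u > 0" "R v > 0" "R w > 0" "R w' > 0"
    and gt: "R u > C\<^sup>2 * R v"
    and Gu: "G u \<le> R u" and Gv: "G v \<ge> R v" and Guv: "G u = C\<^sup>2 * G v"
    and Goff: "\<forall>z. z \<noteq> u \<and> z \<noteq> v \<longrightarrow> G z = R z"
    and bal: "R w' / C\<^sup>2 \<le> R w" "R w \<le> C\<^sup>2 * R w'"
    and near: "w = u \<or> w = v \<or> w' = u \<or> w' = v \<Longrightarrow>
       \<forall>x\<in>{w,w',u,v}. \<forall>y\<in>{w,w',u,v}. R x \<le> C^3 * R y"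
  shows "G w' / C\<^sup>2 \<le> G w \<and> G w \<le> C\<^sup>2 * G w'"
proof -
  define c where "c = C\<^sup>2"
  have c1: "c > 1" unfolding c_def using C by (simp add: one_less_power)
  have C3: "C^3 \<le> c * c" unfolding c_def using C by (simp add: power_increasing flip: power_add)
  have Kmono: "C^3 * t \<le> c * c * t" if "t \<ge> 0" for t using C3 that by (simp add: mult_right_mono)
  have cm: "c * s \<le> c * t" if "s \<le> t" for s t using c1 that by simp
  have cd: "s / c \<le> t / c" if "s \<le> t" for s t using c1 that by (simp add: divide_right_mono)
  note gt' = gt[folded c_def] and Guv' = Guv[folded c_def] and bal' = bal[folded c_def]
  show ?thesis
  proof (cases "w = u \<or> w = v \<or> w' = u \<or> w' = v")
    case False
    then show ?thesis using Goff bal by auto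
  next
    case True
    note nr = near[OF True]
    have nr2: "R x \<le> c * c * R y" if "x \<in> {w,w',u,v}" "y \<in> {w,w',u,v}" for x y
    proof -
      have "R y \<ge> 0" using that(2) pos by auto
      then show ?thesis using nr that Kmono[of "R y"] by fastforce
    qed
    have Gvpos: "G v > 0" using Gv pos by linarith
    have cc: "C\<^sup>2 = c" using c_def by simp
    show ?thesis unfolding cc
    proof (cases "{w,w'} = {u,v}")
      case True
      then have "(w = u \<and> w' = v) \<or> (w = v \<and> w' = u)" using ww by (auto simp: doubleton_eq_iff)
      then show "G w' / c \<le> G w \<and> G w \<le> c * G w'" using Guv' c1 Gvpos less_1_mult[OF c1 c1] by (auto simp: field_simps)
    next
      case ne: False
      consider "w = u" "w' \<noteq> v" "w' \<noteq> u" | "w = v" "w' \<noteq> u" "w' \<noteq> v"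
        | "w' = u" "w \<noteq> v" "w \<noteq> u" | "w' = v" "w \<noteq> u" "w \<noteq> v"
        using True ne ww by auto
      then show "G w' / c \<le> G w \<and> G w \<le> c * G w'"
      proof cases
        case 1
        have Gw': "G w' = R w'" using Goff 1 by auto
        have a: "R w' \<le> c * c * R v" using nr2[of _ "v"] 1 by simp
        have "R w' / c \<le> c * R v" using a c1 by (simp add: field_simps)
        also have "\<dots> \<le> G u" using Guv' cm[OF Gv] by simp
        finally show "G w' / c \<le> G w \<and> G w \<le> c * G w'" using 1 Gw' Gu bal' by simp
      next
        case 2
        have Gw': "G w' = R w'" using Goff 2 by auto
        have a: "R u \<le> c * c * R w'" using nr2[of _ "w'"] 2 by simp
        have "G v = G u / c" using Guv' c1 by simp
        also have "\<dots> \<le> R u / c" using cd[OF Gu] .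
        also have "\<dots> \<le> c * R w'" using a c1 by (simp add: field_simps)
        finally have up: "G v \<le> c * R w'" .
        have "R w' / c \<le> R v" using bal' 2 by simp
        then show "G w' / c \<le> G w \<and> G w \<le> c * G w'" using 2 Gw' up Gv by simp
      next
        case 3
        have Gw: "G w = R w" using Goff 3 by auto
        have a: "R w \<le> c * c * R v" using nr2[of _ "v"] 3 by simp
        have "R w \<le> c * (c * R v)" using a by (simp add: mult.assoc)
        also have "\<dots> \<le> c * G u" using cm[OF cm[OF Gv]] Guv' by simp
        finally have lo: "G w / c \<le> G u" using Gw c1 by (simp add: field_simps)
        then have h1: "G w \<le> c * G u" using c1 by (simp add: field_simps)
        have "G u / c \<le> R u / c" using cd[OF Gu] .
        then show "G w' / c \<le> G w \<and> G w \<le> c * G w'" using 3 Gw h1 bal' by simp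
      next
        case 4
        have Gw: "G w = R w" using Goff 4 by auto
        have a: "R u \<le> c * c * R w" using nr2[of _ "w"] 4 by simp
        have "G v = G u / c" using Guv' c1 by simp
        also have "\<dots> \<le> R u / c" using cd[OF Gu] .
        also have "\<dots> \<le> c * R w" using a c1 by (simp add: field_simps)
        finally have up: "G v / c \<le> R w" using c1 by (simp add: field_simps)
        have "R w \<le> c * R v" using bal' 4 by simp
        also have "\<dots> \<le> c * G v" using cm[OF Gv] .
        finally show "G w' / c \<le> G w \<and> G w \<le> c * G w'" using 4 Gw up by simp
      qed
    qed
  qed
qed


lemma filling_facts:
  assumes "hyperbolic_filling X d a lam x0 Xs par"
  shows "a \<ge> lam" "lam \<ge> 6" "\<And>n. maximal_separated X d (a powr (- real n)) (Xs n)"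
    "\<And>n x. x \<in> Xs (Suc n) \<Longrightarrow> \<exists>y. par (x, Suc n) = (y, n) \<and> y \<in> Xs n \<and> (\<forall>z\<in>Xs n. d x y \<le> d x z)"
    "\<And>n. Xs n \<subseteq> X"
  using assms unfolding hyperbolic_filling_def maximal_separated_def separated_def by auto

lemma par_level:
  assumes "hyperbolic_filling X d a lam x0 Xs par" "v \<in> level Xs (Suc n)"
  shows "par v \<in> level Xs n"
  using assms(2) filling_facts(4)[OF assms(1)] unfolding level_def by force

lemma iter_level:
  assumes "hyperbolic_filling X d a lam x0 Xs par" "v \<in> level Xs n" "i \<le> n"
  shows "(par ^^ i) v \<in> level Xs (n - i)"
  using assms(3)
proof (induction i)
  case 0 then show ?case using assms(2) by simp
next
  case (Suc i)
  then have "(par ^^ i) v \<in> level Xs (Suc (n - Suc i))"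
    by (metis Suc_diff_Suc Suc_le_lessD less_imp_le_nat)
  then show ?case using par_level[OF assms(1)] by simp
qed

lemma level_vertices: "v \<in> level Xs n \<Longrightarrow> v \<in> vertices Xs"
  unfolding vertices_def by auto

lemma level_snd: "v \<in> level Xs n \<Longrightarrow> snd v = n"
  unfolding level_def by auto

lemma P_pos:
  assumes "hyperbolic_filling X d a lam x0 Xs par" "\<forall>v\<in>vertices Xs. 0 < rho v"
    "v \<in> level Xs n"
  shows "filling_pi par rho v powr p > 0"
proof -
  have "filling_pi par rho v > 0" unfolding filling_pi_def
  proof (rule prod_pos)
    fix i assume "i \<in> {0..snd v}"
    then have "i \<le> n" using level_snd[OF assms(3)] by simp
    then show "0 < rho ((par ^^ i) v)"
      using iter_level[OF assms(1,3)] assms(2) level_vertices by blast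
  qed
  then show ?thesis by simp
qed

lemma par_close:
  assumes ms: "Metric_space X d" and f: "hyperbolic_filling X d a lam x0 Xs par"
    and x: "x \<in> Xs (Suc n)"
  obtains y where "par (x, Suc n) = (y, n)" "y \<in> Xs n" "d x y < a powr (- real n)"
proof -
  obtain y where y: "par (x, Suc n) = (y, n)" "y \<in> Xs n" "\<forall>z\<in>Xs n. d x y \<le> d x z"
    using filling_facts(4)[OF f x] by blast
  have "d x y < a powr (- real n)"
  proof (rule ccontr)
    assume "\<not> ?thesis"
    then have ge: "\<forall>z\<in>Xs n. a powr (- real n) \<le> d x z" using y(3) by force
    have xX: "x \<in> X" using filling_facts(5)[OF f] x by blast
    have ms': "maximal_separated X d (a powr (- real n)) (Xs n)" using filling_facts(3)[OF f] .
    have "separated X d (a powr (- real n)) (insert x (Xs n))"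
      using ms' ge xX unfolding maximal_separated_def separated_def
      by (auto simp: Metric_space.commute[OF ms])
    then have "insert x (Xs n) = Xs n" using ms' unfolding maximal_separated_def by blast
    then have "x \<in> Xs n" by blast
    then have "a powr (- real n) \<le> d x x" using ge by blast
    moreover have "d x x = 0" using Metric_space.zero[OF ms xX xX] by simp
    moreover have "a > 0" using filling_facts(1,2)[OF f] by linarith
    ultimately show False by simp
  qed
  then show ?thesis using y that by blast
qed

lemma hedge_dist:
  assumes ms: "Metric_space X d" and "horizontal_edge X d a lam Xs (x, n) (y, m)"
  shows "m = n" "x \<in> X" "y \<in> X" "d x y < 2 * (lam * a powr (- real n))"
proof -
  obtain z where z: "x \<in> X" "y \<in> X" "z \<in> X" "d x z < lam * a powr (- real n)"
     "d y z < lam * a powr (- real n)" "m = n"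
  proof -
    from assms(2) obtain z where "z \<in> Metric_space.mball X d x (lam * a powr (- real n))"
       "z \<in> Metric_space.mball X d y (lam * a powr (- real n))" "m = n"
      unfolding horizontal_edge_def by auto
    then show ?thesis using that unfolding Metric_space.in_mball[OF ms] by blast
  qed
  show "m = n" "x \<in> X" "y \<in> X" using z by auto
  have "d x y \<le> d x z + d z y" using Metric_space.triangle[OF ms] z by blast
  then show "d x y < 2 * (lam * a powr (- real n))" using z Metric_space.commute[OF ms, of z y] by linarith
qed


lemma near_par:
  assumes ms: "Metric_space X d" and f: "hyperbolic_filling X d a lam x0 Xs par"
    and mb: "balanced_level X d a lam Xs par C P k mu"
    and Ppos: "\<forall>v\<in>level Xs k. P v > 0" and C: "C > 1"
    and x: "x \<in> Xs (Suc k)" and y: "y \<in> Xs (Suc k)"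
    and dxy: "d x y < 4 * (lam * a powr (- real (Suc k)))"
  shows "mu (par (x, Suc k)) / P (par (x, Suc k)) \<le> C\<^sup>2 * (mu (par (y, Suc k)) / P (par (y, Suc k)))"
proof -
  obtain p where p: "par (x, Suc k) = (p, k)" "p \<in> Xs k" "d x p < a powr (- real k)"
    using par_close[OF ms f x] by blast
  obtain q where q: "par (y, Suc k) = (q, k)" "q \<in> Xs k" "d y q < a powr (- real k)"
    using par_close[OF ms f y] by blast
  have lam: "lam \<ge> 6" "a \<ge> lam" using filling_facts[OF f] by auto
  have a0: "a > 0" using lam by linarith
  have XX: "Xs n \<subseteq> X" for n using filling_facts(5)[OF f] .
  have pX: "p \<in> X" "q \<in> X" "x \<in> X" "y \<in> X" using p q x y XX by blast+
  have pw: "a powr (- real (Suc k)) = a powr (- real k) / a"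
    using a0 by (simp add: powr_diff powr_minus_divide)
  have "lam * a powr (- real (Suc k)) \<le> a powr (- real k)"
    unfolding pw using lam a0 by (simp add: field_simps)
  then have dxy': "d x y < 4 * a powr (- real k)" using dxy by linarith
  have "d p q \<le> d p x + d x q" using Metric_space.triangle[OF ms] pX by blast
  moreover have "d x q \<le> d x y + d y q" using Metric_space.triangle[OF ms] pX by blast
  moreover have "d p x = d x p" using Metric_space.commute[OF ms] by blast
  ultimately have "d p q < 6 * a powr (- real k)" using p q dxy' by linarith
  moreover have "6 * a powr (- real k) \<le> lam * a powr (- real k)"
    using lam by (simp add: mult_right_mono)
  ultimately have dpq: "d p q < lam * a powr (- real k)" by linarith
  have lp: "(p, k) \<in> level Xs k" "(q, k) \<in> level Xs k" using p q unfolding level_def by auto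
  have mpos: "mu (p, k) / P (p, k) > 0"
    using mb lp Ppos unfolding balanced_level_def by auto
  show ?thesis
  proof (cases "p = q")
    case True
    have "1 \<le> C\<^sup>2" using C by (simp add: one_le_power)
    then have "1 * (mu (p, k) / P (p, k)) \<le> C\<^sup>2 * (mu (p, k) / P (p, k))"
      using mpos by (intro mult_right_mono) auto
    then show ?thesis using True p q by simp
  next
    case False
    have "d q q = 0" using Metric_space.zero[OF ms] pX by blast
    moreover have "lam * a powr (- real k) > 0" using lam a0 by simp
    ultimately have "q \<in> Metric_space.mball X d p (lam * a powr (- real k))"
         "q \<in> Metric_space.mball X d q (lam * a powr (- real k))"
      unfolding Metric_space.in_mball[OF ms] using pX dpq by auto
    then have "horizontal_edge X d a lam Xs (p, k) (q, k)"
      unfolding horizontal_edge_def using p q False by blast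
    then have "filling_adj X d a lam Xs par (p, k) (q, k)"
      unfolding filling_adj_def using lp level_vertices False by blast
    then show ?thesis using mb lp p q unfolding balanced_level_def by auto
  qed
qed

theorem lemma3p13:
  fixes X :: "'a set" and d :: "'a \<Rightarrow> 'a \<Rightarrow> real"
    and a lam p C :: real and x0 :: 'a and Xs :: "nat \<Rightarrow> 'a set"
    and par :: "'a \<times> nat \<Rightarrow> 'a \<times> nat" and rho :: "'a \<times> nat \<Rightarrow> real"
    and k :: nat and mu f0 :: "'a \<times> nat \<Rightarrow> real"
    and w1 w1' w w' :: "'a \<times> nat"
  assumes metric: "Metric_space X d"
    and compact: "compact_space (Metric_space.mtopology X d)"
    and doubling: "doubling_metric X d"
    and diam: "mdiam X d = 1/2"
    and filling: "hyperbolic_filling X d a lam x0 Xs par"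
    and rho_pos: "\<forall>v\<in>vertices Xs. 0 < rho v"
    and H1: "H1 Xs rho"
    and H4: "H4 Xs par rho p"
    and p_pos: "0 < p"
    and C: "C > 1"
    and mu_pmf: "prob_mass mu (level Xs k)"
    and mu_bal: "balanced_level X d a lam Xs par C (\<lambda>v. filling_pi par rho v powr p) k mu"
    and f0_pmf: "prob_mass f0 (level Xs (Suc k))"
    and f0_le1: "\<forall>v\<in>level Xs (Suc k). f0 v \<le> 1"
    and compat: "compatible Xs par C (\<lambda>v. filling_pi par rho v powr p) k mu f0"
    and e: "w1 \<in> level Xs (Suc k)" "w1' \<in> level Xs (Suc k)"
           "horizontal_edge X d a lam Xs w1 w1'"
    and unbal: "\<not> balanced_on_edge C (\<lambda>v. filling_pi par rho v powr p) f0 w1 w1'"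
    and e': "w \<in> level Xs (Suc k)" "w' \<in> level Xs (Suc k)"
            "horizontal_edge X d a lam Xs w w'"
    and bal: "balanced_on_edge C (\<lambda>v. filling_pi par rho v powr p) f0 w w'"
  shows "balanced_on_edge C (\<lambda>v. filling_pi par rho v powr p)
           (balancing_op C (\<lambda>v. filling_pi par rho v powr p) w1 w1' f0) w w'"
proof -
  define P where "P = (\<lambda>v. filling_pi par rho v powr p)"
  define L where "L = lam * a powr (- real (Suc k))"
  define R where "R = (\<lambda>z. f0 z / P z)"
  define g where "g = balancing_op C P w1 w1' f0"
  define G where "G = (\<lambda>z. g z / P z)"
  define M where "M = (\<lambda>z. mu z / P z)"
  have Ppos: "\<And>v n. v \<in> level Xs n \<Longrightarrow> P v > 0"
    unfolding P_def using P_pos[OF filling rho_pos] by blast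
  have f0pos: "\<And>v. v \<in> level Xs (Suc k) \<Longrightarrow> f0 v > 0" using f0_pmf unfolding prob_mass_def by blast
  have Rpos: "\<And>v. v \<in> level Xs (Suc k) \<Longrightarrow> R v > 0" unfolding R_def using Ppos f0pos by simp
  have C2: "C\<^sup>2 > 1" using C by (simp add: one_less_power)
  obtain x1 x1' x x' where xs: "w1 = (x1, Suc k)" "w1' = (x1', Suc k)" "w = (x, Suc k)" "w' = (x', Suc k)"
    "x1 \<in> Xs (Suc k)" "x1' \<in> Xs (Suc k)" "x \<in> Xs (Suc k)" "x' \<in> Xs (Suc k)"
    using e(1,2) e'(1,2) unfolding level_def by blast
  have XX: "Xs n \<subseteq> X" for n using filling_facts(5)[OF filling] .
  have inX: "x1 \<in> X" "x1' \<in> X" "x \<in> X" "x' \<in> X" using xs XX by blast+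
  have d1: "d x1 x1' < 2 * L" using hedge_dist(4)[OF metric] e(3) xs unfolding L_def by blast
  have d2: "d x x' < 2 * L" using hedge_dist(4)[OF metric] e'(3) xs unfolding L_def by blast
  have ne1: "w1 \<noteq> w1'" and ne2: "w \<noteq> w'" using e(3) e'(3) unfolding horizontal_edge_def by auto
  have com: "\<And>s t. d s t = d t s" using Metric_space.commute[OF metric] .
  have z0: "\<And>s. s \<in> X \<Longrightarrow> d s s = 0" using Metric_space.zero[OF metric] by blast
  have L0: "L > 0" unfolding L_def using filling_facts(1,2)[OF filling] by simp
  have center: "d s t < 4 * L" if "c \<in> X" "s \<in> X" "t \<in> X" "d c s < 2 * L" "d c t < 2 * L" for c s t
  proof -
    have "d s t \<le> d s c + d c t" using Metric_space.triangle[OF metric] that by blast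
    then show ?thesis using that com[of s c] by linarith
  qed
  have close: "\<forall>s\<in>{x,x',x1,x1'}. \<forall>t\<in>{x,x',x1,x1'}. d s t < 4 * L"
    if sh: "w = w1 \<or> w = w1' \<or> w' = w1 \<or> w' = w1'"
  proof -
    obtain c where c: "c \<in> X" "\<forall>s\<in>{x,x',x1,x1'}. d c s < 2 * L"
    proof -
      consider "x = x1" | "x = x1'" | "x' = x1" | "x' = x1'" using sh xs by auto
      then show ?thesis
      proof cases
        case 1 then show ?thesis using that[of x1] d1 d2 inX z0 L0 by auto
      next
        case 2 then show ?thesis using that[of x1'] d1 d2 inX z0 L0 com[of x1 x1'] by auto
      next
        case 3 then show ?thesis using that[of x1] d1 d2 inX z0 L0 com[of x x'] by auto
      next
        case 4 then show ?thesis using that[of x1'] d1 d2 inX z0 L0 com[of x x'] com[of x1 x1'] by auto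
      qed
    qed
    show ?thesis
    proof (intro ballI)
      fix s t assume st: "s \<in> {x,x',x1,x1'}" "t \<in> {x,x',x1,x1'}"
      then have "s \<in> X" "t \<in> X" using inX by auto
      then show "d s t < 4 * L" using center[OF c(1)] c(2) st by blast
    qed
  qed
  have Rnear: "R s \<le> C^3 * R t" if hs: "s \<in> level Xs (Suc k)" "t \<in> level Xs (Suc k)"
     "d (fst s) (fst t) < 4 * L" for s t
  proof -
    obtain ys yt where y: "s = (ys, Suc k)" "t = (yt, Suc k)" "ys \<in> Xs (Suc k)" "yt \<in> Xs (Suc k)"
      using hs unfolding level_def by blast
    have m: "M (par s) \<le> C\<^sup>2 * M (par t)" unfolding M_def
      using near_par[OF metric filling mu_bal[folded P_def] _ C y(3,4)] Ppos hs(3) y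
      unfolding L_def by auto
    have c1: "R s \<le> C * M (par s)" "M (par t) \<le> R t"
      using compat hs unfolding compatible_def R_def M_def P_def by auto
    have "R s \<le> C * (C\<^sup>2 * M (par t))" using c1 m C by (smt (verit) mult_left_mono)
    also have "\<dots> \<le> C * (C\<^sup>2 * R t)" using c1 C by (simp add: mult_left_mono)
    finally show ?thesis by (simp add: power3_eq_cube power2_eq_square mult.assoc)
  qed
  have near4: "\<forall>s\<in>{w,w',w1,w1'}. \<forall>t\<in>{w,w',w1,w1'}. R s \<le> C^3 * R t"
    if sh: "w = w1 \<or> w = w1' \<or> w' = w1 \<or> w' = w1'"
  proof (intro ballI)
    fix s t assume st: "s \<in> {w,w',w1,w1'}" "t \<in> {w,w',w1,w1'}"
    have "d (fst s) (fst t) < 4 * L" using close[OF sh] st xs by auto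
    moreover have "s \<in> level Xs (Suc k)" "t \<in> level Xs (Suc k)" using st e e' by auto
    ultimately show "R s \<le> C^3 * R t" using Rnear by blast
  qed
  have balR: "R w' / C\<^sup>2 \<le> R w" "R w \<le> C\<^sup>2 * R w'"
    using bal unfolding balanced_on_edge_def R_def P_def by auto
  have "G w' / C\<^sup>2 \<le> G w \<and> G w \<le> C\<^sup>2 * G w'"
  proof (cases "R w1 > C\<^sup>2 * R w1'")
    case True
    have gdef: "g = (let \<alpha> = (f0 w1 / P w1 - C\<^sup>2 * (f0 w1' / P w1')) / (C\<^sup>2 / P w1' + 1 / P w1)
         in f0(w1 := f0 w1 - \<alpha>, w1' := f0 w1' + \<alpha>))"
      using True unfolding g_def balancing_op_def R_def by simp
    note bs = bal_step[OF Ppos[OF e(1)] Ppos[OF e(2)] C ne1 True[unfolded R_def] gdef]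
    show ?thesis
    proof (rule core[OF C ne1 ne2 Rpos[OF e(1)] Rpos[OF e(2)] Rpos[OF e'(1)] Rpos[OF e'(2)] True])
      show "G w1 \<le> R w1" "G w1' \<ge> R w1'" "G w1 = C\<^sup>2 * G w1'"
        using bs(2-4) unfolding G_def R_def by auto
      show "\<forall>z. z \<noteq> w1 \<and> z \<noteq> w1' \<longrightarrow> G z = R z" using bs(1) unfolding G_def R_def by auto
      show "R w' / C\<^sup>2 \<le> R w" "R w \<le> C\<^sup>2 * R w'" using balR .
      show "\<forall>s\<in>{w,w',w1,w1'}. \<forall>t\<in>{w,w',w1,w1'}. R s \<le> C^3 * R t"
        if "w = w1 \<or> w = w1' \<or> w' = w1 \<or> w' = w1'" using near4 that by blast
    qed
  next
    case False
    have F2: "R w1' > C\<^sup>2 * R w1"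
    proof -
      have "\<not> (R w1' / C\<^sup>2 \<le> R w1)" using False unbal unfolding balanced_on_edge_def R_def P_def by auto
      then have "R w1 < R w1' / C\<^sup>2" by simp
      moreover have "C\<^sup>2 > 0" using C by simp
      ultimately show ?thesis by (simp add: less_divide_eq mult.commute)
    qed
    have gdef: "g = (let \<alpha> = (f0 w1' / P w1' - C\<^sup>2 * (f0 w1 / P w1)) / (C\<^sup>2 / P w1 + 1 / P w1')
         in f0(w1' := f0 w1' - \<alpha>, w1 := f0 w1 + \<alpha>))"
      using False F2 unfolding g_def balancing_op_def R_def by simp
    note bs = bal_step[OF Ppos[OF e(2)] Ppos[OF e(1)] C ne1[symmetric] F2[unfolded R_def] gdef]
    show ?thesis
    proof (rule core[OF C ne1[symmetric] ne2 Rpos[OF e(2)] Rpos[OF e(1)] Rpos[OF e'(1)] Rpos[OF e'(2)] F2])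
      show "G w1' \<le> R w1'" "G w1 \<ge> R w1" "G w1' = C\<^sup>2 * G w1"
        using bs(2-4) unfolding G_def R_def by auto
      show "\<forall>z. z \<noteq> w1' \<and> z \<noteq> w1 \<longrightarrow> G z = R z" using bs(1) unfolding G_def R_def by auto
      show "R w' / C\<^sup>2 \<le> R w" "R w \<le> C\<^sup>2 * R w'" using balR .
      show "\<forall>s\<in>{w,w',w1',w1}. \<forall>t\<in>{w,w',w1',w1}. R s \<le> C^3 * R t"
        if "w = w1' \<or> w = w1 \<or> w' = w1' \<or> w' = w1" using near4 that by (auto simp: insert_commute)
    qed
  qed
  then show ?thesis unfolding balanced_on_edge_def G_def g_def P_def by simp
qed

end
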